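(* Let $T>0$ and constants $K_1\ge0$, $K_2\ne0$ with $K_1+K_2\ge0$; put $\beta=K_1/K_2$ and, for $t\in[0,T]$, $$\Lambda(t,T)=1+\frac{K_1}{K_2}\Big(1-e^{-\frac{K_2(T-t)}{2}}\Big)+\frac{K_1}{K_2}\Big(1-e^{-\frac{K_2t}{2}}\Big)+\Big(\frac{K_1}{K_2}\Big)^2\Big[\Big(1-e^{-\frac{K_2t}{2}}\Big)+\frac12\Big(e^{-\frac{K_2(T+t)}{2}}-e^{-\frac{K_2(T-t)}{2}}\Big)\Big].$$ (i) If $K_2>0$, then, writing $S=\sqrt{1+\frac{\beta}{2+\beta}\big(1-e^{-\frac{K_2T}{2}}\big)}$, $$\sup_{t\in[0,T]}\Lambda(t,T)=(1+\beta)^2-\Big(\beta+\frac{\beta^2}{2}\Big)S\,e^{-\frac{K_2T}{4}}-\frac{\beta+\beta^2-\frac{\beta^2}{2}e^{-\frac{K_2T}{2}}}{S}\,e^{-\frac{K_2T}{4}}.$$ (ii) If $K_2<0$, then $$\sup_{t\in[0,T]}\Lambda(t,T)=\frac12+\frac12\Big(1+\frac{K_1}{K_2}\Big[1-e^{-\frac{K_2T}{2}}\Big]\Big)^2.$$ *)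

theory Defs
  imports Complex_Main
begin

definition Lambda :: "real \<Rightarrow> real \<Rightarrow> real \<Rightarrow> real \<Rightarrow> real" where
  "Lambda K1 K2 T t =
     1 + (K1 / K2) * (1 - exp (- (K2 * (T - t) / 2)))
       + (K1 / K2) * (1 - exp (- (K2 * t / 2)))
       + (K1 / K2)^2 * ((1 - exp (- (K2 * t / 2)))
            + (1/2) * (exp (- (K2 * (T + t) / 2)) - exp (- (K2 * (T - t) / 2))))"

end

theory Submission
  imports Defs
begin

lemma Lambda_form:
  fixes K1 K2 T t :: real
  assumes "K2 \<noteq> 0"
  defines "b \<equiv> K1 / K2" and "E \<equiv> exp (- (K2 * T / 2))" and "x \<equiv> exp (- (K2 * t / 2))"
  shows "Lambda K1 K2 T t = (1+b)^2 - (b + b^2 - b^2 * E / 2) * x - (b + b^2/2) * E / x"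
proof -
  have x0: "x > 0" unfolding x_def by simp
  have e1: "exp (- (K2 * (T - t) / 2)) = E / x"
  proof -
    have "exp (- (K2 * (T - t) / 2)) = exp (- (K2 * T / 2) - (- (K2 * t / 2)))"
      by (rule arg_cong[where f=exp]) (simp add: field_simps)
    also have "\<dots> = E / x" unfolding exp_diff E_def x_def ..
    finally show ?thesis .
  qed
  have e2: "exp (- (K2 * (T + t) / 2)) = E * x"
  proof -
    have "exp (- (K2 * (T + t) / 2)) = exp (- (K2 * T / 2) + (- (K2 * t / 2)))"
      by (rule arg_cong[where f=exp]) (simp add: field_simps)
    also have "\<dots> = E * x" unfolding exp_add E_def x_def ..
    finally show ?thesis .
  qed
  show ?thesis unfolding Lambda_def e1 e2 b_def[symmetric] x_def[symmetric] using x0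
    by (simp add: field_simps power2_eq_square)
qed

lemma sup_max:
  fixes f :: "real \<Rightarrow> real"
  assumes "t0 \<in> {0..T}" "\<And>t. t \<in> {0..T} \<Longrightarrow> f t \<le> f t0"
  shows "(SUP t\<in>{0..T}. f t) = f t0"
  by (rule cSup_eq_maximum) (use assms in auto)

theorem proposition2:
  fixes T K1 K2 :: real
  assumes "T > 0" and "K1 \<ge> 0" and "K2 \<noteq> 0" and "K1 + K2 \<ge> 0"
  shows "(K2 > 0 \<longrightarrow>
           (let \<beta> = K1 / K2;
                S = sqrt (1 + \<beta> / (2 + \<beta>) * (1 - exp (- (K2 * T / 2))))
            in (SUP t\<in>{0..T}. Lambda K1 K2 T t) =
                 (1 + \<beta>)^2 - (\<beta> + \<beta>^2 / 2) * S * exp (- (K2 * T / 4))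
                 - (\<beta> + \<beta>^2 - \<beta>^2 / 2 * exp (- (K2 * T / 2))) / S * exp (- (K2 * T / 4))))
       \<and> (K2 < 0 \<longrightarrow>
           (SUP t\<in>{0..T}. Lambda K1 K2 T t) =
             1/2 + 1/2 * (1 + K1 / K2 * (1 - exp (- (K2 * T / 2))))^2)"
proof (intro conjI impI)
  define b where "b = K1 / K2"
  define E where "E = exp (- (K2 * T / 2))"
  define A where "A = b + b^2 - b^2 * E / 2"
  define c where "c = b + b^2/2"
  have form: "\<And>t. Lambda K1 K2 T t = (1+b)^2 - A * exp (- (K2 * t / 2)) - c * E / exp (- (K2 * t / 2))"
    using Lambda_form[OF assms(3), of K1 T] unfolding A_def c_def b_def E_def by simp
  have E0: "E > 0" unfolding E_def by simp
  {
    assume K2: "K2 < 0"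
    have E1: "E > 1" unfolding E_def using K2 assms(1)
      by (simp add: mult_neg_pos)
    have bm: "b \<le> -1" unfolding b_def using K2 assms(4) by (simp add: field_simps)
    have key: "Lambda K1 K2 T t \<le> Lambda K1 K2 T T" if t: "t \<in> {0..T}" for t
    proof -
      define x where "x = exp (- (K2 * t / 2))"
      have x1: "x \<ge> 1" unfolding x_def using t K2 by (simp add: mult_nonpos_nonneg)
      have xE: "x \<le> E" unfolding x_def E_def using t K2
        by (simp add: mult_left_mono_neg)
      have xT: "exp (- (K2 * T / 2)) = E" by (simp add: E_def)
      have l1: "c * E - A * 1 * E \<ge> 0"
      proof -
        have "c * E - A * 1 * E = E * (b^2 * (E - 1) / 2)"
          unfolding A_def c_def by (simp add: algebra_simps power2_eq_square)
        moreover have "E * (b^2 * (E - 1) / 2) \<ge> 0" using E0 E1 by simp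
        ultimately show ?thesis by linarith
      qed
      have l2: "c * E - A * E * E \<ge> 0"
      proof -
        have eq: "2 * (c * E - A * E * E) = E * (b * (1 - E) * (2 + b * (1 - E)))"
          unfolding A_def c_def by (simp add: algebra_simps power2_eq_square)
        have p1: "b * (1 - E) \<ge> 0" using bm E1 by (simp add: mult_nonpos_nonpos)
        have p2: "2 + b * (1 - E) > 0" using p1 by linarith
        have "E * (b * (1 - E) * (2 + b * (1 - E))) \<ge> 0" using E0 p1 p2 by simp
        hence "0 \<le> 2 * (c * E - A * E * E)" unfolding eq .
        thus ?thesis by simp
      qed
      have l3: "c * E - A * x * E \<ge> 0"
      proof -
        have eq: "(E - 1) * (c * E - A * x * E) = (E - x) * (c*E - A*1*E) + (x - 1) * (c*E - A*E*E)"
          by (simp add: algebra_simps)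
        have "(E - x) * (c*E - A*1*E) + (x - 1) * (c*E - A*E*E) \<ge> 0"
          using l1 l2 x1 xE by simp
        hence "(E - 1) * (c * E - A * x * E) \<ge> 0" unfolding eq .
        thus ?thesis using E1 by (simp add: zero_le_mult_iff)
      qed
      have diff: "Lambda K1 K2 T T - Lambda K1 K2 T t = (E - x) * (c * E - A * x * E) / (x * E)"
        unfolding form x_def[symmetric] xT using x1 E0 by (simp add: field_simps)
      have "(E - x) * (c * E - A * x * E) / (x * E) \<ge> 0"
        using xE l3 x1 E0 by simp
      thus ?thesis using diff by simp
    qed
    have "(SUP t\<in>{0..T}. Lambda K1 K2 T t) = Lambda K1 K2 T T"
      by (rule sup_max) (use assms(1) key in auto)
    also have "\<dots> = 1/2 + 1/2 * (1 + K1 / K2 * (1 - exp (- (K2 * T / 2))))^2"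
      unfolding form b_def[symmetric] E_def[symmetric] A_def c_def using E0
      by (simp add: field_simps power2_eq_square)
    finally show "(SUP t\<in>{0..T}. Lambda K1 K2 T t) =
             1/2 + 1/2 * (1 + K1 / K2 * (1 - exp (- (K2 * T / 2))))^2" .
  }
  {
    assume K2: "K2 > 0"
    define r where "r = exp (- (K2 * T / 4))"
    have r0: "r > 0" unfolding r_def by simp
    have Er: "E = r^2" unfolding E_def r_def
      by (simp add: power2_eq_square exp_add[symmetric])
    have r1: "r < 1" unfolding r_def using K2 assms(1) by simp
    have b0: "b \<ge> 0" unfolding b_def using K2 assms(2) by simp
    define S where "S = sqrt (1 + b / (2 + b) * (1 - E))"
    have E1: "E < 1" using Er r1 r0 by (simp add: power_less_one_iff)
    have nn: "b / (2 + b) * (1 - E) \<ge> 0" using b0 E1 by simp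
    have S1: "S \<ge> 1" unfolding S_def using nn by simp
    show "let \<beta> = K1 / K2;
                S = sqrt (1 + \<beta> / (2 + \<beta>) * (1 - exp (- (K2 * T / 2))))
            in (SUP t\<in>{0..T}. Lambda K1 K2 T t) =
                 (1 + \<beta>)^2 - (\<beta> + \<beta>^2 / 2) * S * exp (- (K2 * T / 4))
                 - (\<beta> + \<beta>^2 - \<beta>^2 / 2 * exp (- (K2 * T / 2))) / S * exp (- (K2 * T / 4))"
    proof (cases "b = 0")
      case True
      hence K10: "K1 = 0" unfolding b_def using assms(3) by simp
      have "(SUP t\<in>{0..T}. Lambda K1 K2 T t) = Lambda K1 K2 T 0"
        by (rule sup_max) (use assms(1) K10 in \<open>auto simp: Lambda_def\<close>)
      then show ?thesis using K10 by (simp add: Lambda_def)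
    next
      case False
      hence bp: "b > 0" using b0 by simp
      have cp: "c > 0" unfolding c_def using bp by (simp add: add_pos_nonneg)
      have SS: "S^2 = A / c"
      proof -
        have "1 + b / (2 + b) * (1 - E) \<ge> 0" using nn by simp
        hence "S^2 = 1 + b / (2 + b) * (1 - E)" unfolding S_def by simp
        also have "\<dots> = A / c"
        proof -
          have cb: "c = b * (2 + b) / 2" unfolding c_def by (simp add: power2_eq_square field_simps)
          have "c * (1 + b / (2 + b) * (1 - E)) = c + b * b / 2 * (1 - E)"
            unfolding cb using bp by (simp add: field_simps)
          also have "\<dots> = A" unfolding A_def c_def by (simp add: power2_eq_square field_simps)
          finally show ?thesis using cp by (simp add: field_simps)
        qed
        finally show ?thesis .
      qed
      define xs where "xs = r / S"
      have xs0: "xs > 0" unfolding xs_def using r0 S1 by simp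
      have BA: "c * E = A * xs^2"
        unfolding xs_def Er using SS S1 cp by (simp add: field_simps power2_eq_square)
      define t0 where "t0 = - 2 * ln xs / K2"
      have ext0: "exp (- (K2 * t0 / 2)) = xs" unfolding t0_def using K2 xs0 by simp
      have xs1: "xs \<le> 1" unfolding xs_def using r1 S1 r0 by simp
      have xsE: "E \<le> xs"
      proof -
        have "E * A \<le> c"
          unfolding A_def c_def Er
        proof -
          have "r^2 * (b + b^2 - b^2 * r^2 / 2) \<le> b + b^2/2 \<longleftrightarrow>
                0 \<le> b * (1 - r^2) + b^2/2 * (1 - r^2)^2"
            by (simp add: algebra_simps power2_eq_square)
          moreover have "0 \<le> b * (1 - r^2) + b^2/2 * (1 - r^2)^2"
            using bp r1 r0 by (simp add: power_le_one)
          ultimately show "r^2 * (b + b^2 - b^2 * r^2 / 2) \<le> b + b^2/2" by simp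
        qed
        note EA = this
        have cSA: "c * S^2 = A" using SS cp by simp
        have "c * (E * S^2) = E * (c * S^2)" by (simp add: algebra_simps)
        also have "\<dots> = E * A" using cSA by simp
        also have "\<dots> \<le> c * 1" using EA by simp
        finally have "c * (E * S^2) \<le> c * 1" .
        hence "E * S^2 \<le> 1" using cp by (simp only: mult_le_cancel_left_pos)
        hence "r^2 * S^2 \<le> 1" using Er by simp
        hence "(r*S)^2 \<le> 1^2" by (simp add: power_mult_distrib)
        hence "r * S \<le> 1" by (rule power2_le_imp_le) simp
        hence "r^2 \<le> r / S" using r0 S1 by (simp add: field_simps power2_eq_square)
        thus ?thesis unfolding xs_def Er .
      qed
      have t0in: "t0 \<in> {0..T}"
      proof -
        have "ln xs \<le> 0" using xs1 xs0 by simp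
        hence a: "0 \<le> t0" unfolding t0_def using K2 by (simp add: divide_nonpos_pos)
        have "ln E \<le> ln xs" using xsE E0 by simp
        hence "- (K2 * T / 2) \<le> ln xs" unfolding E_def by simp
        hence "t0 \<le> T" unfolding t0_def using K2 by (simp add: field_simps)
        with a show ?thesis by simp
      qed
      have Ap: "A > 0"
      proof -
        have "A = c * S^2" using SS cp by simp
        moreover have "S^2 > 0" using S1 by simp
        ultimately show ?thesis using cp by simp
      qed
      have key: "Lambda K1 K2 T t \<le> Lambda K1 K2 T t0" if "t \<in> {0..T}" for t
      proof -
        define x where "x = exp (- (K2 * t / 2))"
        have x0: "x > 0" unfolding x_def by simp
        have "Lambda K1 K2 T t0 - Lambda K1 K2 T t = A * (x - xs)^2 / x"
          unfolding form x_def[symmetric] ext0 BA using x0 xs0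
          by (simp add: field_simps power2_eq_square)
        moreover have "A * (x - xs)^2 / x \<ge> 0" using Ap x0 by simp
        ultimately show ?thesis by simp
      qed
      have "(SUP t\<in>{0..T}. Lambda K1 K2 T t) = Lambda K1 K2 T t0"
        by (rule sup_max) (use t0in key in auto)
      also have "\<dots> = (1+b)^2 - c * S * r - A / S * r"
        unfolding form ext0 xs_def Er using S1 r0
        by (simp add: field_simps power2_eq_square)
      finally show ?thesis
        unfolding Let_def b_def[symmetric] E_def[symmetric] S_def[symmetric] r_def[symmetric]
        unfolding A_def c_def by simp
    qed
  }
qed

end
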